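(* Let $d$ be prime and let $f:\mathbb{Z}_{c_1}\times\mathbb{Z}_{c_2}\to\mathbb{Z}_d$ be a function that cannot be written as $f(s_1,s_2)=[g_1(s_1)+g_2(s_2)]_d$ for any $g_1:\mathbb{Z}_{c_1}\to\mathbb{Z}_d$, $g_2:\mathbb{Z}_{c_2}\to\mathbb{Z}_d$. Then the only non-signalling distribution $p(m_1,m_2|s_1,s_2)$ ($m_1,m_2\in\mathbb{Z}_d$) whose correlator is $p(k|\mathbf{s})=\delta^k_{f(\mathbf{s})}$ for all $\mathbf{s}$ is $$p(m_1,m_2|s_1,s_2)=\begin{cases}d^{-1}&\text{if }[m_1+m_2]_d=f(s_1,s_2),\\0&\text{otherwise.}\end{cases}$$
   Context: $[\cdot]_d$ is reduction mod $d$. Correlator: $p(k|\mathbf{s})=\sum_{(m_1,m_2):[m_1+m_2]_d=k}p(m_1,m_2|\mathbf{s})$. Non-signalling (bipartite): $\sum_{m_2}p(m_1,m_2|s_1,s_2)$ is independent of $s_2$ and $\sum_{m_1}p(m_1,m_2|s_1,s_2)$ is independent of $s_1$. *)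

theory Defs
  imports Complex_Main "HOL-Computational_Algebra.Primes"
begin

text \<open>Z_n is modelled as {0..<n} (natural numbers below n).
  A bipartite behaviour is p m1 m2 s1 s2 = p(m1,m2|s1,s2), with outputs m1,m2 < d
  and inputs s1 < c1, s2 < c2.\<close>

definition is_distribution :: "nat \<Rightarrow> nat \<Rightarrow> nat \<Rightarrow> (nat \<Rightarrow> nat \<Rightarrow> nat \<Rightarrow> nat \<Rightarrow> real) \<Rightarrow> bool" where
  "is_distribution d c1 c2 p \<longleftrightarrow>
     (\<forall>s1<c1. \<forall>s2<c2.
        (\<forall>m1<d. \<forall>m2<d. 0 \<le> p m1 m2 s1 s2) \<and>
        (\<Sum>m1<d. \<Sum>m2<d. p m1 m2 s1 s2) = 1)"

definition non_signalling :: "nat \<Rightarrow> nat \<Rightarrow> nat \<Rightarrow> (nat \<Rightarrow> nat \<Rightarrow> nat \<Rightarrow> nat \<Rightarrow> real) \<Rightarrow> bool" where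
  "non_signalling d c1 c2 p \<longleftrightarrow>
     (\<forall>s1<c1. \<forall>s2<c2. \<forall>s2'<c2. \<forall>m1<d.
        (\<Sum>m2<d. p m1 m2 s1 s2) = (\<Sum>m2<d. p m1 m2 s1 s2')) \<and>
     (\<forall>s1<c1. \<forall>s1'<c1. \<forall>s2<c2. \<forall>m2<d.
        (\<Sum>m1<d. p m1 m2 s1 s2) = (\<Sum>m1<d. p m1 m2 s1' s2))"

definition correlator :: "nat \<Rightarrow> (nat \<Rightarrow> nat \<Rightarrow> nat \<Rightarrow> nat \<Rightarrow> real) \<Rightarrow> nat \<Rightarrow> nat \<Rightarrow> nat \<Rightarrow> real" where
  "correlator d p k s1 s2 =
     (\<Sum>(m1,m2)\<in>{(m1,m2). m1 < d \<and> m2 < d \<and> (m1 + m2) mod d = k}. p m1 m2 s1 s2)"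

end

theory Submission
  imports Defs "HOL-Number_Theory.Number_Theory"
begin

lemma uniq: "(m1::nat) < d \<Longrightarrow> a < d \<Longrightarrow> b < d \<Longrightarrow> (m1+a) mod d = (m1+b) mod d \<Longrightarrow> a = b"
  using cong_add_lcancel_nat[of m1 a b d] unfolding cong_def by simp

lemma modsum: assumes "(d::nat) > 0" "F < d" shows "(nat (x mod int d) + nat ((int F - x) mod int d)) mod d = F"
proof -
  have "int ((nat (x mod int d) + nat ((int F - x) mod int d)) mod d) = (x mod int d + (int F - x) mod int d) mod int d"
    using assms by (simp add: zmod_int)
  also have "\<dots> = int F mod int d" by (simp add: mod_add_eq)
  also have "\<dots> = int F" using assms by simp
  finally show ?thesis by simp
qed

theorem lemma2p3p1:
  fixes d c1 c2 :: nat
    and f :: "nat \<Rightarrow> nat \<Rightarrow> nat"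
    and p :: "nat \<Rightarrow> nat \<Rightarrow> nat \<Rightarrow> nat \<Rightarrow> real"
  assumes "prime d"
    and "c1 \<ge> 1" and "c2 \<ge> 1"
    and f_range: "\<forall>s1<c1. \<forall>s2<c2. f s1 s2 < d"
    and not_additive: "\<not> (\<exists>g1 g2. (\<forall>s1<c1. g1 s1 < d) \<and> (\<forall>s2<c2. g2 s2 < d) \<and>
                          (\<forall>s1<c1. \<forall>s2<c2. f s1 s2 = (g1 s1 + g2 s2) mod d))"
    and "is_distribution d c1 c2 p"
    and "non_signalling d c1 c2 p"
    and corr: "\<forall>s1<c1. \<forall>s2<c2. \<forall>k<d.
                 correlator d p k s1 s2 = (if k = f s1 s2 then 1 else 0)"
  shows "\<forall>s1<c1. \<forall>s2<c2. \<forall>m1<d. \<forall>m2<d.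
           p m1 m2 s1 s2 = (if (m1 + m2) mod d = f s1 s2 then 1 / real d else 0)"
proof -
  have dpos: "d > 0" using \<open>prime d\<close> prime_gt_0_nat by blast
  define D where "D = int d"
  have Dpos: "D > 0" using dpos D_def by simp
  have c1: "0 < c1" and c2: "0 < c2" using assms(2,3) by auto
  have nonneg: "\<And>s1 s2 m1 m2. s1<c1 \<Longrightarrow> s2<c2 \<Longrightarrow> m1<d \<Longrightarrow> m2<d \<Longrightarrow> 0 \<le> p m1 m2 s1 s2"
    using assms(6) unfolding is_distribution_def by blast
  have ns1: "\<And>s1 s2 s2' m1. s1<c1 \<Longrightarrow> s2<c2 \<Longrightarrow> s2'<c2 \<Longrightarrow> m1<d \<Longrightarrow>
      (\<Sum>m2<d. p m1 m2 s1 s2) = (\<Sum>m2<d. p m1 m2 s1 s2')"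
    using assms(7) unfolding non_signalling_def by blast
  have ns2: "\<And>s1 s1' s2 m2. s1<c1 \<Longrightarrow> s1'<c1 \<Longrightarrow> s2<c2 \<Longrightarrow> m2<d \<Longrightarrow>
      (\<Sum>m1<d. p m1 m2 s1 s2) = (\<Sum>m1<d. p m1 m2 s1' s2)"
    using assms(7) unfolding non_signalling_def by blast
  have Z: "p m1 m2 s1 s2 = 0" if "s1<c1" "s2<c2" "m1<d" "m2<d" "(m1+m2) mod d \<noteq> f s1 s2" for s1 s2 m1 m2
  proof -
    define k where "k = (m1+m2) mod d"
    have kd: "k < d" using dpos k_def by simp
    define S where "S = {(a,b). a < d \<and> b < d \<and> (a + b) mod d = k}"
    have fin: "finite S" by (rule finite_subset[of _ "{..<d} \<times> {..<d}"]) (auto simp: S_def)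
    have "correlator d p k s1 s2 = 0" using corr that kd k_def by auto
    hence "(\<Sum>(a,b)\<in>S. p a b s1 s2) = 0" unfolding correlator_def S_def by simp
    moreover have "\<forall>x\<in>S. 0 \<le> (case x of (a,b) \<Rightarrow> p a b s1 s2)"
      using nonneg that by (auto simp: S_def)
    ultimately have "\<forall>x\<in>S. (case x of (a,b) \<Rightarrow> p a b s1 s2) = 0"
      using sum_nonneg_eq_0_iff[OF fin] by blast
    moreover have "(m1,m2) \<in> S" using that k_def S_def by simp
    ultimately show ?thesis by auto
  qed
  define A where "A s1 m1 = (\<Sum>m2<d. p m1 m2 s1 0)" for s1 m1
  define B where "B s2 m2 = (\<Sum>m1<d. p m1 m2 0 s2)" for s2 m2
  have PA: "p m1 m2 s1 s2 = A s1 m1" if "s1<c1" "s2<c2" "m1<d" "m2<d" "(m1+m2) mod d = f s1 s2" for s1 s2 m1 m2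
  proof -
    have "A s1 m1 = (\<Sum>m<d. p m1 m s1 s2)" unfolding A_def using ns1 that c2 by metis
    also have "\<dots> = p m1 m2 s1 s2 + (\<Sum>m\<in>{..<d}-{m2}. p m1 m s1 s2)"
      using that sum.remove[of "{..<d}" m2 "\<lambda>m. p m1 m s1 s2"] by simp
    also have "(\<Sum>m\<in>{..<d}-{m2}. p m1 m s1 s2) = 0"
    proof (rule sum.neutral, intro ballI)
      fix m assume m: "m \<in> {..<d}-{m2}"
      have "(m1+m) mod d \<noteq> f s1 s2" using uniq[of m1 d m m2] m that by auto
      thus "p m1 m s1 s2 = 0" using Z that m by auto
    qed
    finally show ?thesis by simp
  qed
  have PB: "p m1 m2 s1 s2 = B s2 m2" if "s1<c1" "s2<c2" "m1<d" "m2<d" "(m1+m2) mod d = f s1 s2" for s1 s2 m1 m2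
  proof -
    have "B s2 m2 = (\<Sum>m<d. p m m2 s1 s2)" unfolding B_def using ns2 that c1 by metis
    also have "\<dots> = p m1 m2 s1 s2 + (\<Sum>m\<in>{..<d}-{m1}. p m m2 s1 s2)"
      using that sum.remove[of "{..<d}" m1 "\<lambda>m. p m m2 s1 s2"] by simp
    also have "(\<Sum>m\<in>{..<d}-{m1}. p m m2 s1 s2) = 0"
    proof (rule sum.neutral, intro ballI)
      fix m assume m: "m \<in> {..<d}-{m1}"
      have "(m+m2) mod d \<noteq> f s1 s2" using uniq[of m2 d m m1] m that by (auto simp: add.commute)
      thus "p m m2 s1 s2 = 0" using Z that m by auto
    qed
    finally show ?thesis by simp
  qed
  define a where "a s1 x = A s1 (nat (x mod D))" for s1 x
  define b where "b s2 y = B s2 (nat (y mod D))" for s2 y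
  define F where "F s1 s2 = int (f s1 s2)" for s1 s2
  have key: "a s1 x = b s2 (F s1 s2 - x)" if "s1<c1" "s2<c2" for s1 s2 x
  proof -
    define m1 where "m1 = nat (x mod D)"
    define m2 where "m2 = nat ((F s1 s2 - x) mod D)"
    have m1d: "m1 < d" using Dpos unfolding m1_def D_def by (simp add: nat_less_iff)
    have m2d: "m2 < d" using Dpos unfolding m2_def D_def by (simp add: nat_less_iff)
    have "(m1+m2) mod d = f s1 s2" unfolding m1_def m2_def D_def F_def
      using modsum[OF dpos] f_range that by blast
    hence "A s1 m1 = B s2 m2" using PA PB that m1d m2d by metis
    thus ?thesis unfolding a_def b_def m1_def m2_def .
  qed
  have shift: "a s1 x = a 0 (x + (F 0 s2 - F s1 s2))" if "s1<c1" "s2<c2" for s1 s2 x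
    using key[OF that, of x] key[OF c1 that(2), of "x + (F 0 s2 - F s1 s2)"] by simp
  have aper: "a s x = a s y" if "x mod D = y mod D" for s x y
    using that unfolding a_def by simp
  have "\<exists>r. r mod D \<noteq> 0 \<and> (\<forall>x. a 0 (x + r) = a 0 x)"
  proof (rule ccontr)
    assume H: "\<not> ?thesis"
    have eqG: "(F 0 s2 - F s1 s2) mod D = (F 0 0 - F s1 0) mod D" if "s1<c1" "s2<c2" for s1 s2
    proof (rule ccontr)
      assume ne: "\<not> ?thesis"
      define r where "r = (F 0 s2 - F s1 s2) - (F 0 0 - F s1 0)"
      have "r mod D \<noteq> 0" using ne unfolding r_def by (metis mod_eq_dvd_iff dvd_eq_mod_eq_0)
      moreover have "a 0 (x + r) = a 0 x" for x
      proof -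
        have "a 0 (x + r) = a s1 (x - (F 0 0 - F s1 0))"
          using shift[OF that, of "x - (F 0 0 - F s1 0)"] by (simp add: r_def algebra_simps)
        also have "\<dots> = a 0 x" using shift[OF that(1) c2, of "x - (F 0 0 - F s1 0)"] by simp
        finally show ?thesis .
      qed
      ultimately show False using H by blast
    qed
    define g1 where "g1 s1 = nat ((F s1 0 - F 0 0) mod D)" for s1
    define g2 where "g2 s2 = f 0 s2" for s2
    have "(\<forall>s1<c1. g1 s1 < d) \<and> (\<forall>s2<c2. g2 s2 < d) \<and>
          (\<forall>s1<c1. \<forall>s2<c2. f s1 s2 = (g1 s1 + g2 s2) mod d)"
    proof (intro conjI allI impI)
      fix s1 assume "s1 < c1" thus "g1 s1 < d" using Dpos unfolding g1_def D_def by (simp add: nat_less_iff)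
    next
      fix s2 assume "s2 < c2" thus "g2 s2 < d" using f_range c1 unfolding g2_def by blast
    next
      fix s1 s2 assume s: "s1 < c1" "s2 < c2"
      have "int ((g1 s1 + g2 s2) mod d) = ((F s1 0 - F 0 0) mod D + F 0 s2) mod D"
        unfolding g1_def g2_def F_def D_def using Dpos D_def by (simp add: zmod_int)
      also have "\<dots> = (F s1 0 - F 0 0 + F 0 s2) mod D" by (simp add: mod_add_left_eq)
      also have "\<dots> = F s1 s2 mod D"
      proof -
        have "[F 0 s2 - F s1 s2 = F 0 0 - F s1 0] (mod D)" using eqG[OF s] by (simp add: cong_def)
        hence "[F 0 s2 - F s1 s2 + (F s1 s2 + F s1 0 - F 0 0) = F 0 0 - F s1 0 + (F s1 s2 + F s1 0 - F 0 0)] (mod D)"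
          by (rule cong_add) simp
        thus ?thesis by (simp add: cong_def algebra_simps)
      qed
      also have "\<dots> = F s1 s2" using f_range s unfolding F_def D_def by simp
      finally show "f s1 s2 = (g1 s1 + g2 s2) mod d" unfolding F_def by linarith
    qed
    thus False using not_additive by blast
  qed
  then obtain r where r: "r mod D \<noteq> 0" "\<And>x. a 0 (x + r) = a 0 x" by blast
  have "coprime r D"
  proof -
    have "prime D" using \<open>prime d\<close> D_def by simp
    moreover have "\<not> D dvd r" using r(1) by (simp add: dvd_eq_mod_eq_0)
    ultimately show ?thesis using prime_imp_coprime_int coprime_commute by blast
  qed
  then obtain u where u: "[r * u = 1] (mod D)" using cong_solve_coprime_int by blast
  define n where "n = nat (u mod D)"
  have nu: "[int n = u] (mod D)" unfolding n_def cong_def using Dpos by simp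
  have itr: "a 0 (x + int k * r) = a 0 x" for k x
  proof (induction k)
    case 0 then show ?case by simp
  next
    case (Suc k)
    have "a 0 (x + int (Suc k) * r) = a 0 ((x + int k * r) + r)" by (simp add: algebra_simps)
    also have "\<dots> = a 0 (x + int k * r)" by (rule r(2))
    finally show ?case using Suc by simp
  qed
  have step: "a 0 (x + 1) = a 0 x" for x
  proof -
    have "[int n * r = 1] (mod D)"
    proof -
      have "[int n * r = u * r] (mod D)" using nu by (rule cong_mult) simp
      thus ?thesis using u by (metis cong_trans mult.commute)
    qed
    hence "[x + int n * r = x + 1] (mod D)" by (rule cong_add[OF cong_refl])
    hence "a 0 (x + 1) = a 0 (x + int n * r)" using aper unfolding cong_def by metis
    thus ?thesis using itr by simp
  qed
  have const_n: "a 0 (int k) = a 0 0" for k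
  proof (induction k)
    case 0 then show ?case by simp
  next
    case (Suc k)
    have "a 0 (int (Suc k)) = a 0 (int k + 1)" by (simp add: add.commute)
    also have "\<dots> = a 0 (int k)" by (rule step)
    finally show ?case using Suc by simp
  qed
  have const: "a 0 x = a 0 0" for x
  proof -
    have "x mod D = int (nat (x mod D)) mod D" using Dpos by simp
    hence "a 0 x = a 0 (int (nat (x mod D)))" by (rule aper)
    thus ?thesis using const_n[of "nat (x mod D)"] by simp
  qed
  have Aconst: "A 0 m = A 0 0" if "m < d" for m
  proof -
    have "a 0 (int m) = a 0 0" by (rule const)
    thus ?thesis using that unfolding a_def D_def by simp
  qed
  have "(\<Sum>m<d. A 0 m) = 1"
    using assms(6) c1 c2 unfolding is_distribution_def A_def by blast
  moreover have "(\<Sum>m<d. A 0 m) = (\<Sum>m<d. A 0 0)" by (rule sum.cong) (auto intro: Aconst)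
  ultimately have "real d * A 0 0 = 1" by simp
  hence A00: "A 0 0 = 1 / real d" using dpos by (simp add: field_simps)
  show ?thesis
  proof (intro allI impI)
    fix s1 s2 m1 m2 assume s: "s1 < c1" "s2 < c2" "m1 < d" "m2 < d"
    show "p m1 m2 s1 s2 = (if (m1 + m2) mod d = f s1 s2 then 1 / real d else 0)"
    proof (cases "(m1 + m2) mod d = f s1 s2")
      case True
      have "p m1 m2 s1 s2 = A s1 m1" using PA s True by blast
      also have "\<dots> = a s1 (int m1)" unfolding a_def D_def using s by simp
      also have "\<dots> = a 0 0" using shift[OF s(1,2), of "int m1"] const[of "int m1 + (F 0 s2 - F s1 s2)"] by simp
      also have "\<dots> = 1 / real d" unfolding a_def using A00 by simp
      finally show ?thesis using True by simp
    next
      case False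
      then show ?thesis using Z s by simp
    qed
  qed
qed

end
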